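(* Let $(P,\lambda)$ be a marked poset which is strict and irredundant. If all inequalities describing the marked chain polytope $\mathcal{C}(P,\lambda)$ (in an irredundant description) are of the form $x_i\ge 0$ for $i\in P\setminus P^*$ or $\sum_{i\in I}x_i\le 1$ for subsets $I\subseteq P\setminus P^*$, then $\mathcal{C}(P,\lambda)$ is the chain polytope of some poset on the set $P\setminus P^*$.
   Context: A marked poset $(P,\lambda)$ is a finite poset $(P,\preceq)$ together with an induced subposet $P^*\subseteq P$ of marked elements and an order-preserving marking $\lambda:P^*\to\mathbb{R}$; it is always assumed that all minimal and all maximal elements of $P$ lie in $P^*$. It is strict if $\lambda(a)<\lambda(b)$ whenever $a\prec b$ in $P^*$, and irredundant (regular) if for every covering relation $p\prec q$ in $P$ and all $a,b\in P^*$ with $a\preceq q$ and $p\preceq b$, one has $a=b$ or $\lambda(a)<\lambda(b)$. The marked chain polytope $\mathcal{C}(P,\lambda)$ is the set of all $x\in\mathbb{R}_{\ge0}^{P\setminus P^*}$ with $x_{p_1}+\dots+x_{p_k}\le\lambda(b)-\lambda(a)$ for every maximal chain $a\prec p_1\prec\cdots\prec p_k\prec b$ in $P$ with $a,b\in P^*$ and $p_1,\dots,p_k\in P\setminus P^*$. The chain polytope of a finite poset $Q$ is the set of $x\in\mathbb{R}^Q$ with $x_c\ge0$ for all $c$ and $x_{c_1}+\dots+x_{c_k}\le 1$ for every chain $c_1\prec\cdots\prec c_k$ in $Q$. *)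

theory Defs
  imports Main "HOL.Real"
begin

definition poset_on :: "'a set \<Rightarrow> ('a \<times> 'a) set \<Rightarrow> bool" where
  "poset_on P le \<longleftrightarrow> le \<subseteq> P \<times> P \<and> (\<forall>x\<in>P. (x,x) \<in> le) \<and> trans le \<and> antisym le"

definition strictly_below :: "('a \<times> 'a) set \<Rightarrow> 'a \<Rightarrow> 'a \<Rightarrow> bool" where
  "strictly_below le a b \<longleftrightarrow> (a,b) \<in> le \<and> a \<noteq> b"

definition covers :: "('a \<times> 'a) set \<Rightarrow> 'a \<Rightarrow> 'a \<Rightarrow> bool" where
  "covers le p q \<longleftrightarrow> strictly_below le p q \<and>
     \<not> (\<exists>z. strictly_below le p z \<and> strictly_below le z q)"

definition marked_poset :: "'a set \<Rightarrow> ('a \<times> 'a) set \<Rightarrow> 'a set \<Rightarrow> ('a \<Rightarrow> real) \<Rightarrow> bool" where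
  "marked_poset P le Ps lam \<longleftrightarrow> finite P \<and> poset_on P le \<and> Ps \<subseteq> P \<and>
     (\<forall>a\<in>Ps. \<forall>b\<in>Ps. (a,b) \<in> le \<longrightarrow> lam a \<le> lam b) \<and>
     (\<forall>p\<in>P. (\<forall>q\<in>P. \<not> strictly_below le q p) \<longrightarrow> p \<in> Ps) \<and>
     (\<forall>p\<in>P. (\<forall>q\<in>P. \<not> strictly_below le p q) \<longrightarrow> p \<in> Ps)"

definition strict_marked :: "('a \<times> 'a) set \<Rightarrow> 'a set \<Rightarrow> ('a \<Rightarrow> real) \<Rightarrow> bool" where
  "strict_marked le Ps lam \<longleftrightarrow>
     (\<forall>a\<in>Ps. \<forall>b\<in>Ps. strictly_below le a b \<longrightarrow> lam a < lam b)"

definition irredundant_marked :: "('a \<times> 'a) set \<Rightarrow> 'a set \<Rightarrow> ('a \<Rightarrow> real) \<Rightarrow> bool" where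
  "irredundant_marked le Ps lam \<longleftrightarrow>
     (\<forall>p q. covers le p q \<longrightarrow>
        (\<forall>a\<in>Ps. \<forall>b\<in>Ps. (a,q) \<in> le \<and> (p,b) \<in> le \<longrightarrow> a = b \<or> lam a < lam b))"

text \<open>Points of R^Q, represented as functions vanishing outside Q.\<close>
definition vecs :: "'a set \<Rightarrow> ('a \<Rightarrow> real) set" where
  "vecs Q = {x. \<forall>i. i \<notin> Q \<longrightarrow> x i = 0}"

text \<open>Marked chain polytope: constraints for every saturated (maximal) chain
  a < p1 < ... < pk < b with a, b marked and all p_i unmarked.\<close>
definition marked_chain_polytope ::
  "'a set \<Rightarrow> ('a \<times> 'a) set \<Rightarrow> 'a set \<Rightarrow> ('a \<Rightarrow> real) \<Rightarrow> ('a \<Rightarrow> real) set" where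
  "marked_chain_polytope P le Ps lam =
     {x \<in> vecs (P - Ps). (\<forall>i \<in> P - Ps. 0 \<le> x i) \<and>
        (\<forall>a b ps. a \<in> Ps \<and> b \<in> Ps \<and> set ps \<subseteq> P - Ps \<and>
            successively (covers le) (a # ps @ [b]) \<longrightarrow>
            sum_list (map x ps) \<le> lam b - lam a)}"

definition is_chain :: "('a \<times> 'a) set \<Rightarrow> 'a set \<Rightarrow> bool" where
  "is_chain R C \<longleftrightarrow> (\<forall>c\<in>C. \<forall>d\<in>C. (c,d) \<in> R \<or> (d,c) \<in> R)"

definition chain_polytope :: "'a set \<Rightarrow> ('a \<times> 'a) set \<Rightarrow> ('a \<Rightarrow> real) set" where
  "chain_polytope Q R =
     {x \<in> vecs Q. (\<forall>c\<in>Q. 0 \<le> x c) \<and> (\<forall>C. C \<subseteq> Q \<and> is_chain R C \<longrightarrow> sum x C \<le> 1)}"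

definition special_hpoly :: "'a set \<Rightarrow> 'a set \<Rightarrow> 'a set set \<Rightarrow> ('a \<Rightarrow> real) set" where
  "special_hpoly Q N II =
     {x \<in> vecs Q. (\<forall>i\<in>N. 0 \<le> x i) \<and> (\<forall>I\<in>II. sum x I \<le> 1)}"

end

theory Submission imports Defs begin

lemma sorted_wrt_irrefl_distinct:
  assumes "sorted_wrt r xs" "\<And>x. \<not> r x x" shows "distinct xs"
  using assms by (induction xs) auto

lemma succ_path_trancl:
  assumes "(x,y) \<in> r\<^sup>+" shows "\<exists>qs. successively (\<lambda>u v. (u,v) \<in> r) (x # qs @ [y])"
  using assms
proof (induction rule: trancl_induct)
  case (base y) then show ?case by (intro exI[of _ "[]"]) simp
next
  case (step y z)
  then obtain qs where "successively (\<lambda>u v. (u,v) \<in> r) (x # qs @ [y])" by blast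
  then have "successively (\<lambda>u v. (u,v) \<in> r) ((x # qs @ [y]) @ [z])"
    using step(2) by (subst successively_append_iff) simp
  then show ?case by (intro exI[of _ "qs @ [y]"]) simp
qed

lemma succ_sorted_trancl:
  assumes "successively (\<lambda>u v. (u,v) \<in> r) xs" shows "sorted_wrt (\<lambda>u v. (u,v) \<in> r\<^sup>+) xs"
proof -
  have "successively (\<lambda>u v. (u,v) \<in> r\<^sup>+) xs"
    by (rule successively_mono[OF assms]) auto
  moreover have "transp (\<lambda>u v. (u,v) \<in> r\<^sup>+)" by (auto simp: transp_def)
  ultimately show ?thesis using successively_conv_sorted_wrt by blast
qed

lemma finite_has_max_rel:
  assumes "finite D" "D \<noteq> {}" "\<And>x y z. S x y \<Longrightarrow> S y z \<Longrightarrow> S x z" "\<And>x. \<not> S x x"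
  shows "\<exists>r\<in>D. \<forall>z\<in>D. \<not> S r z"
  using assms(1,2)
proof (induction rule: finite_ne_induct)
  case (singleton x) then show ?case using assms(4) by auto
next
  case (insert x F)
  then obtain m where m: "m \<in> F" "\<forall>z\<in>F. \<not> S m z" by blast
  show ?case
  proof (cases "S m x")
    case True
    then have "\<forall>z\<in>insert x F. \<not> S x z" using m assms(3,4) by blast
    then show ?thesis by blast
  next
    case False then show ?thesis using m by blast
  qed
qed

lemma succ_join: "successively r (xs @ [y]) \<Longrightarrow> successively r (y # ys) \<Longrightarrow> successively r (xs @ y # ys)"
  by (induction xs rule: induct_list012) auto

lemma succ_set: "successively (\<lambda>u v. (u,v) \<in> r) (x # xs) \<Longrightarrow> r \<subseteq> Q \<times> Q \<Longrightarrow> set xs \<subseteq> Q"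
  by (induction xs arbitrary: x) (auto simp: successively_Cons)

locale mposet =
  fixes P Ps :: "'a set" and le :: "('a \<times> 'a) set" and lam :: "'a \<Rightarrow> real"
  assumes mp: "marked_poset P le Ps lam"
    and irr: "irredundant_marked le Ps lam"
begin

lemma finP: "finite P" and leP: "le \<subseteq> P \<times> P" and refl: "\<And>x. x \<in> P \<Longrightarrow> (x,x) \<in> le"
  and trans: "trans le" and antisym: "antisym le" and PsP: "Ps \<subseteq> P"
  and lmono: "\<And>a b. a \<in> Ps \<Longrightarrow> b \<in> Ps \<Longrightarrow> (a,b) \<in> le \<Longrightarrow> lam a \<le> lam b"
  and minP: "\<And>p. p \<in> P \<Longrightarrow> (\<forall>q\<in>P. \<not> strictly_below le q p) \<Longrightarrow> p \<in> Ps"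
  and maxP: "\<And>p. p \<in> P \<Longrightarrow> (\<forall>q\<in>P. \<not> strictly_below le p q) \<Longrightarrow> p \<in> Ps"
  using mp unfolding marked_poset_def poset_on_def by auto

lemma le_trans: "(a,b) \<in> le \<Longrightarrow> (b,c) \<in> le \<Longrightarrow> (a,c) \<in> le"
  using trans unfolding trans_def by blast

lemma le_antisym: "(a,b) \<in> le \<Longrightarrow> (b,a) \<in> le \<Longrightarrow> a = b"
  using antisym unfolding antisym_def by blast

lemma leD: "(a,b) \<in> le \<Longrightarrow> a \<in> P \<and> b \<in> P" using leP by auto

lemma sb_trans: "strictly_below le a b \<Longrightarrow> strictly_below le b c \<Longrightarrow> strictly_below le a c"
  unfolding strictly_below_def using le_trans le_antisym by blast

lemma sb_irrefl: "\<not> strictly_below le a a" unfolding strictly_below_def by simp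

lemma covers_le: "covers le a b \<Longrightarrow> (a,b) \<in> le"
  unfolding covers_def strictly_below_def by simp

lemma chain_sorted: "successively (covers le) xs \<Longrightarrow> sorted_wrt (strictly_below le) xs"
proof -
  assume "successively (covers le) xs"
  then have "successively (strictly_below le) xs"
    by (rule successively_mono) (auto simp: covers_def)
  moreover have "transp (strictly_below le)" using sb_trans by (auto simp: transp_def)
  ultimately show ?thesis using successively_conv_sorted_wrt by blast
qed

lemma chain_distinct: "successively (covers le) xs \<Longrightarrow> distinct xs"
  using chain_sorted sorted_wrt_irrefl_distinct sb_irrefl by blast

lemma R1: "a \<in> Ps \<Longrightarrow> covers le a p \<Longrightarrow> a' \<in> Ps \<Longrightarrow> (a',p) \<in> le \<Longrightarrow> a' = a \<or> lam a' < lam a"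
  using irr leD[OF covers_le] refl unfolding irredundant_marked_def by blast

lemma R2: "b \<in> Ps \<Longrightarrow> covers le p b \<Longrightarrow> w \<in> Ps \<Longrightarrow> (p,w) \<in> le \<Longrightarrow> b = w \<or> lam b < lam w"
  using irr leD[OF covers_le] refl unfolding irredundant_marked_def by blast

lemma R3: "u \<notin> Ps \<Longrightarrow> v \<notin> Ps \<Longrightarrow> covers le u v \<Longrightarrow> a' \<in> Ps \<Longrightarrow> w \<in> Ps
   \<Longrightarrow> (a',v) \<in> le \<Longrightarrow> (u,w) \<in> le \<Longrightarrow> lam a' < lam w"
proof -
  assume h: "u \<notin> Ps" "v \<notin> Ps" "covers le u v" "a' \<in> Ps" "w \<in> Ps" "(a',v) \<in> le" "(u,w) \<in> le"
  then have "a' = w \<or> lam a' < lam w" using irr unfolding irredundant_marked_def by blast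
  moreover have "a' \<noteq> w"
  proof
    assume "a' = w"
    then have "strictly_below le u w" "strictly_below le w v" using h unfolding strictly_below_def by auto
    then show False using h(3) unfolding covers_def by blast
  qed
  ultimately show ?thesis by blast
qed


lemma cover_below: assumes "p \<in> P" "\<exists>q\<in>P. strictly_below le q p" shows "\<exists>r. covers le r p"
proof -
  let ?D = "{q\<in>P. strictly_below le q p}"
  have "finite ?D" using finP by simp
  moreover have "?D \<noteq> {}" using assms by blast
  ultimately obtain r where r: "r \<in> ?D" "\<forall>z\<in>?D. \<not> strictly_below le r z"
    using finite_has_max_rel[of ?D "strictly_below le"] sb_trans sb_irrefl by blast
  have "covers le r p" unfolding covers_def
  proof (intro conjI notI)
    show "strictly_below le r p" using r by simp
    assume "\<exists>z. strictly_below le r z \<and> strictly_below le z p"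
    then obtain z where "strictly_below le r z" "strictly_below le z p" by blast
    moreover then have "z \<in> P" using leD unfolding strictly_below_def by blast
    ultimately show False using r by blast
  qed
  then show ?thesis by blast
qed

lemma cover_above: assumes "p \<in> P" "\<exists>q\<in>P. strictly_below le p q" shows "\<exists>r. covers le p r"
proof -
  let ?D = "{q\<in>P. strictly_below le p q}"
  have "finite ?D" using finP by simp
  moreover have "?D \<noteq> {}" using assms by blast
  ultimately obtain r where r: "r \<in> ?D" "\<forall>z\<in>?D. \<not> strictly_below le z r"
    using finite_has_max_rel[of ?D "\<lambda>x y. strictly_below le y x"] sb_trans sb_irrefl by blast
  have "covers le p r" unfolding covers_def
  proof (intro conjI notI)
    show "strictly_below le p r" using r by simp
    assume "\<exists>z. strictly_below le p z \<and> strictly_below le z r"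
    then obtain z where "strictly_below le p z" "strictly_below le z r" by blast
    moreover then have "z \<in> P" using leD unfolding strictly_below_def by blast
    ultimately show False using r by blast
  qed
  then show ?thesis by blast
qed

lemma down_path: "p \<in> P - Ps \<Longrightarrow> \<exists>a\<in>Ps. \<exists>qs. set qs \<subseteq> P - Ps \<and> successively (covers le) (a # qs @ [p])"
proof (induction "card {q\<in>P. strictly_below le q p}" arbitrary: p rule: less_induct)
  case less
  have pP: "p \<in> P" using less.prems by blast
  have "\<exists>q\<in>P. strictly_below le q p" using minP[OF pP] less.prems by blast
  then obtain r where r: "covers le r p" using cover_below[OF pP] by blast
  have rP: "r \<in> P" using leD[OF covers_le[OF r]] by blast
  show ?case
  proof (cases "r \<in> Ps")
    case True
    then show ?thesis using r by (intro bexI[of _ r] exI[of _ "[]"]) auto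
  next
    case False
    have sub: "{q\<in>P. strictly_below le q r} \<subset> {q\<in>P. strictly_below le q p}"
    proof
      show "{q\<in>P. strictly_below le q r} \<subseteq> {q\<in>P. strictly_below le q p}"
        using r sb_trans unfolding covers_def by blast
      show "{q\<in>P. strictly_below le q r} \<noteq> {q\<in>P. strictly_below le q p}"
        using r rP sb_irrefl unfolding covers_def by blast
    qed
    have "card {q\<in>P. strictly_below le q r} < card {q\<in>P. strictly_below le q p}"
      using psubset_card_mono[OF _ sub] finP by simp
    then obtain a qs where aq: "a \<in> Ps" "set qs \<subseteq> P - Ps" "successively (covers le) (a # qs @ [r])"
      using less.hyps[of r] False rP by blast
    have "successively (covers le) ((a # qs @ [r]) @ [p])"
      using aq(3) r by (subst successively_append_iff) simp
    then show ?thesis using aq False rP by (intro bexI[of _ a] exI[of _ "qs @ [r]"]) auto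
  qed
qed

lemma up_path: "p \<in> P - Ps \<Longrightarrow> \<exists>b\<in>Ps. \<exists>qs. set qs \<subseteq> P - Ps \<and> successively (covers le) (p # qs @ [b])"
proof (induction "card {q\<in>P. strictly_below le p q}" arbitrary: p rule: less_induct)
  case less
  have pP: "p \<in> P" using less.prems by blast
  have "\<exists>q\<in>P. strictly_below le p q" using maxP[OF pP] less.prems by blast
  then obtain r where r: "covers le p r" using cover_above[OF pP] by blast
  have rP: "r \<in> P" using leD[OF covers_le[OF r]] by blast
  show ?case
  proof (cases "r \<in> Ps")
    case True
    then show ?thesis using r by (intro bexI[of _ r] exI[of _ "[]"]) auto
  next
    case False
    have sub: "{q\<in>P. strictly_below le r q} \<subset> {q\<in>P. strictly_below le p q}"
    proof
      show "{q\<in>P. strictly_below le r q} \<subseteq> {q\<in>P. strictly_below le p q}"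
        using r sb_trans unfolding covers_def by blast
      show "{q\<in>P. strictly_below le r q} \<noteq> {q\<in>P. strictly_below le p q}"
        using r rP sb_irrefl unfolding covers_def by blast
    qed
    have "card {q\<in>P. strictly_below le r q} < card {q\<in>P. strictly_below le p q}"
      using psubset_card_mono[OF _ sub] finP by simp
    then obtain b qs where bq: "b \<in> Ps" "set qs \<subseteq> P - Ps" "successively (covers le) (r # qs @ [b])"
      using less.hyps[of r] False rP by blast
    have "successively (covers le) (p # (r # qs) @ [b])"
      using bq(3) r by simp
    then show ?thesis using bq False rP by (intro bexI[of _ b] exI[of _ "r # qs"]) auto
  qed
qed


definition "E = {(p,q). p \<in> P - Ps \<and> q \<in> P - Ps \<and> covers le p q}"
definition "R = Id_on (P - Ps) \<union> E\<^sup>+"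

lemma E_sub: "E \<subseteq> (P - Ps) \<times> (P - Ps)" unfolding E_def by auto

lemma Etr_sub: "E\<^sup>+ \<subseteq> (P - Ps) \<times> (P - Ps)" using trancl_subset_Sigma[OF E_sub] .

lemma Etr_le: "(x,y) \<in> E\<^sup>+ \<Longrightarrow> (x,y) \<in> le"
proof (induction rule: trancl_induct)
  case (base y) then show ?case unfolding E_def using covers_le by auto
next
  case (step y z) then show ?case unfolding E_def using covers_le le_trans by blast
qed

lemma R_sub: "R \<subseteq> (P - Ps) \<times> (P - Ps)" unfolding R_def using Etr_sub by auto

lemma R_le: "(x,y) \<in> R \<Longrightarrow> (x,y) \<in> le"
  unfolding R_def using Etr_le refl by auto

lemma R_trans: "(x,y) \<in> R \<Longrightarrow> (y,z) \<in> R \<Longrightarrow> (x,z) \<in> R"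
  unfolding R_def by (auto intro: trancl_trans)

lemma R_poset: "poset_on (P - Ps) R"
  unfolding poset_on_def
proof (intro conjI)
  show "R \<subseteq> (P - Ps) \<times> (P - Ps)" by (rule R_sub)
  show "\<forall>x\<in>P - Ps. (x, x) \<in> R" unfolding R_def by auto
  show "trans R" using R_trans unfolding trans_def by blast
  show "antisym R" using R_le le_antisym unfolding antisym_def by blast
qed

lemma Rs_trans: "(x,y) \<in> R \<and> x \<noteq> y \<Longrightarrow> (y,z) \<in> R \<and> y \<noteq> z \<Longrightarrow> (x,z) \<in> R \<and> x \<noteq> z"
  using R_trans R_le le_antisym by metis

lemma mid_path:
  "finite A \<Longrightarrow> A \<subseteq> P - Ps \<Longrightarrow> is_chain R A \<Longrightarrow> m \<in> A \<Longrightarrow> \<forall>x\<in>A. (x,m) \<in> R \<Longrightarrow>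
   \<exists>ps. successively (\<lambda>u v. (u,v) \<in> E) ps \<and> set ps \<subseteq> P - Ps \<and> A \<subseteq> set ps \<and> ps \<noteq> [] \<and> last ps = m"
proof (induction "card A" arbitrary: A m rule: less_induct)
  case less
  show ?case
  proof (cases "A = {m}")
    case True
    have mQ: "m \<in> P - Ps" using less.prems(2,4) by blast
    show ?thesis
      apply (rule exI[of _ "[m]"])
      using mQ True by simp
  next
    case False
    let ?A = "A - {m}"
    have fA: "finite ?A" "?A \<noteq> {}" using less.prems(1,4) False by auto
    obtain m' where m': "m' \<in> ?A" "\<forall>z\<in>?A. \<not> ((m',z) \<in> R \<and> m' \<noteq> z)"
      using finite_has_max_rel[OF fA, of "\<lambda>x y. (x,y) \<in> R \<and> x \<noteq> y"] Rs_trans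
      by blast
    have allm': "\<forall>x\<in>?A. (x,m') \<in> R"
    proof
      fix x assume x: "x \<in> ?A"
      show "(x,m') \<in> R"
      proof (cases "x = m'")
        case True then show ?thesis using x less.prems(2) unfolding R_def by blast
      next
        case False
        then show ?thesis using less.prems(3) x m' unfolding is_chain_def by blast
      qed
    qed
    have c: "card ?A < card A" using less.prems(1,4) by (metis card_Diff1_less)
    have ch: "is_chain R ?A" using less.prems(3) unfolding is_chain_def by blast
    have sA: "?A \<subseteq> P - Ps" using less.prems(2) by blast
    have "\<exists>ps. successively (\<lambda>u v. (u,v) \<in> E) ps \<and> set ps \<subseteq> P - Ps \<and> ?A \<subseteq> set ps \<and> ps \<noteq> [] \<and> last ps = m'"
      by (rule less.hyps[OF c fA(1) sA ch m'(1) allm'])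
    then obtain ps where ps: "successively (\<lambda>u v. (u,v) \<in> E) ps" "set ps \<subseteq> P - Ps"
      "?A \<subseteq> set ps" "ps \<noteq> []" "last ps = m'"
      by blast
    have mm1: "(m',m) \<in> R" using less.prems(5) m'(1) by blast
    have mm2: "m' \<noteq> m" using m'(1) by blast
    note mm = mm1 mm2
    then have "(m',m) \<in> E\<^sup>+" unfolding R_def Id_on_def by blast
    from succ_path_trancl[OF this] obtain qs where qs: "successively (\<lambda>u v. (u,v) \<in> E) (m' # qs @ [m])"
      by (elim exE)
    have qsQ: "set (qs @ [m]) \<subseteq> P - Ps" using succ_set[OF qs E_sub] .
    have bl: "butlast ps @ [m'] = ps" using ps(4,5) by (metis append_butlast_last_id)
    have "successively (\<lambda>u v. (u,v) \<in> E) (butlast ps @ m' # qs @ [m])"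
      by (rule succ_join) (use bl ps(1) qs in auto)
    moreover have "butlast ps @ m' # qs @ [m] = ps @ qs @ [m]"
      using bl by (metis append_Cons append_assoc append_self_conv2)
    ultimately have s1: "successively (\<lambda>u v. (u,v) \<in> E) (ps @ qs @ [m])" by simp
    have s2: "set (ps @ qs @ [m]) \<subseteq> P - Ps" using ps(2) qsQ by simp
    have s3: "A \<subseteq> set (ps @ qs @ [m])" using ps(3) by auto
    show ?thesis
      apply (rule exI[of _ "ps @ qs @ [m]"])
      using s1 s2 s3 by simp
  qed
qed

lemma R_chain_max: "finite A \<Longrightarrow> A \<noteq> {} \<Longrightarrow> A \<subseteq> P - Ps \<Longrightarrow> is_chain R A \<Longrightarrow> \<exists>m\<in>A. \<forall>x\<in>A. (x,m) \<in> R"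
proof -
  assume h: "finite A" "A \<noteq> {}" "A \<subseteq> P - Ps" "is_chain R A"
  obtain m where m: "m \<in> A" "\<forall>z\<in>A. \<not> ((m,z) \<in> R \<and> m \<noteq> z)"
    using finite_has_max_rel[OF h(1,2), of "\<lambda>x y. (x,y) \<in> R \<and> x \<noteq> y"] Rs_trans
    by blast
  have "\<forall>x\<in>A. (x,m) \<in> R"
  proof
    fix x assume x: "x \<in> A"
    show "(x,m) \<in> R"
    proof (cases "x = m")
      case True then show ?thesis using x h(3) unfolding R_def by blast
    next
      case False
      then show ?thesis using h(4) x m unfolding is_chain_def by blast
    qed
  qed
  then show ?thesis using m by blast
qed

lemma extend:
  assumes "A \<subseteq> P - Ps" "A \<noteq> {}" "is_chain R A"
  shows "\<exists>a b ps. a \<in> Ps \<and> b \<in> Ps \<and> set ps \<subseteq> P - Ps \<and> successively (covers le) (a # ps @ [b]) \<and> A \<subseteq> set ps"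
proof -
  have fA: "finite A" using assms(1) finP finite_subset by blast
  obtain m where "m \<in> A" "\<forall>x\<in>A. (x,m) \<in> R" using R_chain_max[OF fA assms(2,1,3)] by blast
  then obtain ps where ps: "successively (\<lambda>u v. (u,v) \<in> E) ps" "set ps \<subseteq> P - Ps" "A \<subseteq> set ps" "ps \<noteq> []"
    using mid_path[OF fA assms(1,3)] by blast
  have psc: "successively (covers le) ps" by (rule successively_mono[OF ps(1)]) (auto simp: E_def)
  obtain h t where ht: "ps = h # t" using ps(4) by (cases ps) auto
  have hQ: "h \<in> P - Ps" "last ps \<in> P - Ps" using ps(2,4) ht last_in_set[OF ps(4)] by auto
  obtain a qs1 where a: "a \<in> Ps" "set qs1 \<subseteq> P - Ps" "successively (covers le) (a # qs1 @ [h])"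
    using down_path[OF hQ(1)] by blast
  obtain b qs2 where b: "b \<in> Ps" "set qs2 \<subseteq> P - Ps" "successively (covers le) (last ps # qs2 @ [b])"
    using up_path[OF hQ(2)] by blast
  have s1: "successively (covers le) ((a # qs1) @ ps)"
    using succ_join[of _ "a # qs1" h t] a(3) psc ht by simp
  have eq1: "(a # qs1) @ ps = (a # qs1 @ butlast ps) @ [last ps]" using ps(4) by simp
  have s2: "successively (covers le) ((a # qs1 @ butlast ps) @ last ps # qs2 @ [b])"
    using succ_join[of _ "a # qs1 @ butlast ps" "last ps" "qs2 @ [b]"] s1 eq1 b(3) by simp
  have eq2: "(a # qs1 @ butlast ps) @ last ps # qs2 @ [b] = a # (qs1 @ ps @ qs2) @ [b]"
    using ps(4) by simp
  have s3: "successively (covers le) (a # (qs1 @ ps @ qs2) @ [b])" using s2 by (simp only: eq2)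
  show ?thesis
    apply (rule exI[of _ a], rule exI[of _ b], rule exI[of _ "qs1 @ ps @ qs2"])
    using s3 a b ps by auto
qed


lemma path_sum:
  fixes x y :: "'a \<Rightarrow> real"
  assumes "\<forall>w\<in>P - Ps. \<forall>q. covers le q w \<longrightarrow> x w \<le> y w - y q"
    and "\<forall>u v. covers le u v \<longrightarrow> y u \<le> y v"
  shows "successively (covers le) (u # ts @ [v]) \<Longrightarrow> set ts \<subseteq> P - Ps \<Longrightarrow> sum_list (map x ts) \<le> y v - y u"
proof (induction ts arbitrary: u)
  case Nil
  then have "covers le u v" by simp
  then have "y u \<le> y v" using assms(2) by blast
  then show ?case by simp
next
  case (Cons t ts)
  have c1: "covers le u t" and c2: "successively (covers le) (t # ts @ [v])" using Cons.prems(1) by simp_all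
  have "sum_list (map x ts) \<le> y v - y t" using Cons.IH[OF c2] Cons.prems(2) by simp
  moreover have "x t \<le> y t - y u" using assms(1) c1 Cons.prems(2) by simp
  ultimately show ?case by simp
qed

lemma transfer:
  fixes x y :: "'a \<Rightarrow> real"
  assumes "x \<in> vecs (P - Ps)" "\<forall>i\<in>P - Ps. 0 \<le> x i"
    and "\<forall>u v. covers le u v \<longrightarrow> y u \<le> y v" "\<forall>a\<in>Ps. y a = lam a"
    and "\<forall>w\<in>P - Ps. \<forall>q. covers le q w \<longrightarrow> x w \<le> y w - y q"
  shows "x \<in> marked_chain_polytope P le Ps lam"
  unfolding marked_chain_polytope_def
proof (intro CollectI conjI allI impI)
  show "x \<in> vecs (P - Ps)" "\<forall>i\<in>P - Ps. 0 \<le> x i" using assms(1,2) by auto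
  fix a b ps assume h: "a \<in> Ps \<and> b \<in> Ps \<and> set ps \<subseteq> P - Ps \<and> successively (covers le) (a # ps @ [b])"
  then have "sum_list (map x ps) \<le> y b - y a" using path_sum[OF assms(5,3)] by blast
  then show "sum_list (map x ps) \<le> lam b - lam a" using h assms(4) by simp
qed

definition zf :: "'a list \<Rightarrow> (nat \<Rightarrow> real) \<Rightarrow> 'a \<Rightarrow> real" where
  "zf ps c w = (\<Sum>i<length ps. if ps ! i = w then c (Suc i) - c i else 0)"

lemma zf_nth: "distinct ps \<Longrightarrow> i < length ps \<Longrightarrow> zf ps c (ps ! i) = c (Suc i) - c i"
proof -
  assume d: "distinct ps" and i: "i < length ps"
  have "zf ps c (ps ! i) = (\<Sum>i'<length ps. if i' = i then c (Suc i') - c i' else 0)"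
    unfolding zf_def by (rule sum.cong) (use d i nth_eq_iff_index_eq in auto)
  also have "\<dots> = c (Suc i) - c i" using i by (simp add: sum.delta)
  finally show ?thesis .
qed

lemma zf_out: "w \<notin> set ps \<Longrightarrow> zf ps c w = 0"
  unfolding zf_def by (rule sum.neutral) (auto simp: nth_mem)

lemma feas:
  assumes ne: "ps \<noteq> []" and psQ: "set ps \<subseteq> P - Ps" and srt: "sorted_wrt (strictly_below le) ps"
    and a0: "a0 \<in> Ps" "(a0, ps ! 0) \<in> le"
    and H1: "\<And>i j. i \<le> j \<Longrightarrow> j \<le> length ps \<Longrightarrow> c i \<le> c j"
    and H2: "\<And>i a'. i < length ps \<Longrightarrow> a' \<in> Ps \<Longrightarrow> (a', ps ! i) \<in> le \<Longrightarrow> lam a' \<le> c i"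
    and H3: "\<And>j w. j < length ps \<Longrightarrow> w \<in> Ps \<Longrightarrow> (ps ! j, w) \<in> le \<Longrightarrow> c (Suc j) \<le> lam w"
  shows "zf ps c \<in> marked_chain_polytope P le Ps lam"
proof -
  let ?k = "length ps"
  have dist: "distinct ps" using sorted_wrt_irrefl_distinct[OF srt] sb_irrefl by blast
  have finPs: "finite Ps" using PsP finP finite_subset by blast
  define m0 where "m0 = Min (lam ` Ps)"
  have m0: "\<And>a. a \<in> Ps \<Longrightarrow> m0 \<le> lam a" unfolding m0_def using finPs by simp
  define Y where "Y w = insert m0 (lam ` {a'\<in>Ps. (a',w) \<in> le} \<union> (\<lambda>i. c (Suc i)) ` {i. i < ?k \<and> (ps ! i, w) \<in> le})" for w
  define y where "y w = Max (Y w)" for w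
  have finY: "finite (Y w)" for w unfolding Y_def using finPs by auto
  have Yne: "Y w \<noteq> {}" for w unfolding Y_def by auto
  have Ymono: "(u,v) \<in> le \<Longrightarrow> Y u \<subseteq> Y v" for u v
    unfolding Y_def using le_trans by blast
  have ymono: "(u,v) \<in> le \<Longrightarrow> y u \<le> y v" for u v
    unfolding y_def using Max_mono[OF Ymono Yne finY] by blast
  have c0: "m0 \<le> c i" if "i \<le> ?k" for i
    using m0[OF a0(1)] H2[of 0 a0] a0 ne H1[of 0 i] that by force
  have ord: "(ps ! i, ps ! j) \<in> le" if "i \<le> j" "j < ?k" for i j
  proof (cases "i = j")
    case True then show ?thesis using that psQ nth_mem refl by blast
  next
    case False then show ?thesis using sorted_wrt_nth_less[OF srt, of i j] that unfolding strictly_below_def by simp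
  qed
  have sord: "strictly_below le (ps ! i) (ps ! j)" if "i < j" "j < ?k" for i j
    using sorted_wrt_nth_less[OF srt, of i j] that by simp
  have yPs: "y w = lam w" if w: "w \<in> Ps" for w
    unfolding y_def
  proof (rule Max_eqI[OF finY])
    show "lam w \<in> Y w" unfolding Y_def using w PsP refl by blast
    fix t assume "t \<in> Y w"
    then consider "t = m0" | a' where "a' \<in> Ps" "(a',w) \<in> le" "t = lam a'"
      | i where "i < ?k" "(ps ! i, w) \<in> le" "t = c (Suc i)" unfolding Y_def by blast
    then show "t \<le> lam w"
    proof cases
      case 1 then show ?thesis using m0 w by simp
    next
      case 2 then show ?thesis using lmono w by simp
    next
      case 3 then show ?thesis using H3 w by simp
    qed
  qed
  have yps: "y (ps ! i) = c (Suc i)" if i: "i < ?k" for i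
    unfolding y_def
  proof (rule Max_eqI[OF finY])
    show "c (Suc i) \<in> Y (ps ! i)" unfolding Y_def using i refl psQ nth_mem by blast
    fix t assume "t \<in> Y (ps ! i)"
    then consider "t = m0" | a' where "a' \<in> Ps" "(a',ps ! i) \<in> le" "t = lam a'"
      | j where "j < ?k" "(ps ! j, ps ! i) \<in> le" "t = c (Suc j)" unfolding Y_def by blast
    then show "t \<le> c (Suc i)"
    proof cases
      case 1 then show ?thesis using c0 i by simp
    next
      case 2 then show ?thesis using H2[of i a'] H1[of i "Suc i"] i by simp
    next
      case 3
      have "j \<le> i"
      proof (rule ccontr)
        assume "\<not> j \<le> i"
        then have "strictly_below le (ps ! i) (ps ! j)" using sord 3 by simp
        then show False using 3 le_antisym unfolding strictly_below_def by blast
      qed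
      then show ?thesis using 3 H1[of "Suc j" "Suc i"] i by simp
    qed
  qed
  have ylow: "y q \<le> c i" if i: "i < ?k" and q: "covers le q (ps ! i)" for i q
    unfolding y_def
  proof (subst Max_le_iff[OF finY Yne], intro ballI)
    fix t assume "t \<in> Y q"
    then consider "t = m0" | a' where "a' \<in> Ps" "(a',q) \<in> le" "t = lam a'"
      | j where "j < ?k" "(ps ! j, q) \<in> le" "t = c (Suc j)" unfolding Y_def by blast
    then show "t \<le> c i"
    proof cases
      case 1 then show ?thesis using c0 i by simp
    next
      case 2
      have "(a', ps ! i) \<in> le" using 2 covers_le[OF q] le_trans by blast
      then show ?thesis using H2[of i a'] i 2 by simp
    next
      case 3
      have "j < i"
      proof (rule ccontr)
        assume "\<not> j < i"
        then have "(ps ! i, ps ! j) \<in> le" using ord 3 by simp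
        then have "(ps ! i, q) \<in> le" using 3 le_trans by blast
        then show False using q le_antisym covers_le[OF q] unfolding covers_def strictly_below_def by blast
      qed
      then show ?thesis using 3 H1[of "Suc j" i] i by simp
    qed
  qed
  show ?thesis
  proof (rule transfer[where y = y])
    show "zf ps c \<in> vecs (P - Ps)" unfolding vecs_def using zf_out psQ by blast
    show "\<forall>i\<in>P - Ps. 0 \<le> zf ps c i"
      unfolding zf_def by (auto intro!: sum_nonneg simp: H1)
    show "\<forall>u v. covers le u v \<longrightarrow> y u \<le> y v" using ymono covers_le by blast
    show "\<forall>a\<in>Ps. y a = lam a" using yPs by blast
    show "\<forall>w\<in>P - Ps. \<forall>q. covers le q w \<longrightarrow> zf ps c w \<le> y w - y q"
    proof (intro ballI allI impI)
      fix w q assume w: "w \<in> P - Ps" and q: "covers le q w"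
      show "zf ps c w \<le> y w - y q"
      proof (cases "w \<in> set ps")
        case True
        then obtain i where i: "i < ?k" "w = ps ! i" by (auto simp: in_set_conv_nth)
        then show ?thesis using zf_nth[OF dist i(1)] yps[OF i(1)] ylow[OF i(1)] q by simp
      next
        case False
        then show ?thesis using zf_out[OF False] ymono[OF covers_le[OF q]] by simp
      qed
    qed
  qed
qed


lemma chain_facts:
  assumes ch: "successively (covers le) (a # ps @ [b])"
  shows "distinct ps" "sorted_wrt (strictly_below le) ps"
    "\<And>i. i < length ps \<Longrightarrow> strictly_below le a (ps ! i)"
    "\<And>i. i < length ps \<Longrightarrow> strictly_below le (ps ! i) b"
    "ps \<noteq> [] \<Longrightarrow> covers le a (ps ! 0)"
    "ps \<noteq> [] \<Longrightarrow> covers le (ps ! (length ps - 1)) b"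
    "\<And>i. Suc i < length ps \<Longrightarrow> covers le (ps ! i) (ps ! Suc i)"
proof -
  have srt: "sorted_wrt (strictly_below le) (a # ps @ [b])" using chain_sorted[OF ch] .
  then show "sorted_wrt (strictly_below le) ps" by (simp add: sorted_wrt_append)
  show "distinct ps" using chain_distinct[OF ch] by simp
  show "\<And>i. i < length ps \<Longrightarrow> strictly_below le a (ps ! i)" using srt by (simp add: nth_mem)
  show "\<And>i. i < length ps \<Longrightarrow> strictly_below le (ps ! i) b" using srt by (simp add: sorted_wrt_append nth_mem)
  show "ps \<noteq> [] \<Longrightarrow> covers le a (ps ! 0)" using ch by (cases ps) auto
  show "ps \<noteq> [] \<Longrightarrow> covers le (ps ! (length ps - 1)) b"
  proof -
    assume ne: "ps \<noteq> []"
    have eq: "a # ps @ [b] = (a # butlast ps) @ [last ps, b]" using ne by simp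
    have "successively (covers le) ((a # butlast ps) @ [last ps, b])"
      using ch unfolding eq .
    then have "successively (covers le) [last ps, b]" unfolding successively_append_iff by blast
    then have "covers le (last ps) b" by simp
    then show ?thesis using ne by (simp add: last_conv_nth)
  qed
  show "\<And>i. Suc i < length ps \<Longrightarrow> covers le (ps ! i) (ps ! Suc i)"
  proof -
    fix i assume i: "Suc i < length ps"
    have "successively (covers le) ps" using ch by (simp add: successively_append_iff successively_Cons)
    then show "covers le (ps ! i) (ps ! Suc i)" using successively_nth i by blast
  qed
qed

end

locale mp2 = mposet +
  fixes N :: "'a set" and II :: "'a set set"
  assumes hII: "II \<subseteq> Pow (P - Ps)"
    and hC: "marked_chain_polytope P le Ps lam = special_hpoly (P - Ps) N II"
begin

lemma in_C_chain: "x \<in> marked_chain_polytope P le Ps lam \<Longrightarrow> a \<in> Ps \<Longrightarrow> b \<in> Ps \<Longrightarrow> set ps \<subseteq> P - Ps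
  \<Longrightarrow> successively (covers le) (a # ps @ [b]) \<Longrightarrow> sum_list (map x ps) \<le> lam b - lam a"
  unfolding marked_chain_polytope_def by blast

lemma finI: "I \<in> II \<Longrightarrow> finite I" using hII finP finite_subset by blast

lemma chain_ge1:
  assumes a: "a \<in> Ps" and b: "b \<in> Ps" and psQ: "set ps \<subseteq> P - Ps"
    and ch: "successively (covers le) (a # ps @ [b])" and ne: "ps \<noteq> []"
  shows "1 \<le> lam b - lam a"
proof -
  have d: "distinct ps" using chain_facts[OF ch] by blast
  define k where "k = length ps"
  have kpos: "k > 0" using ne k_def by simp
  have ck: "card (set ps) = k" using d k_def distinct_card by blast
  define x where "x v = (if v \<in> set ps then 1 / real k else 0)" for v
  have "x \<in> special_hpoly (P - Ps) N II"
    unfolding special_hpoly_def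
  proof (intro CollectI conjI ballI)
    show "x \<in> vecs (P - Ps)" unfolding vecs_def x_def using psQ by auto
    show "0 \<le> x i" for i unfolding x_def by simp
    fix I assume I: "I \<in> II"
    have "sum x I = (\<Sum>v\<in>I \<inter> set ps. 1 / real k)"
      unfolding x_def using sum.inter_restrict[OF finI[OF I], of "\<lambda>_. 1 / real k" "set ps"] by simp
    also have "\<dots> = real (card (I \<inter> set ps)) / real k" by simp
    also have "\<dots> \<le> real (card (set ps)) / real k"
      by (intro divide_right_mono) (auto intro: card_mono)
    also have "\<dots> = 1" using ck kpos by simp
    finally show "sum x I \<le> 1" .
  qed
  then have xC: "x \<in> marked_chain_polytope P le Ps lam" using hC by simp
  have "sum_list (map x ps) = sum x (set ps)" using d by (simp add: sum_list_distinct_conv_sum_set)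
  also have "\<dots> = real (card (set ps)) * (1 / real k)" unfolding x_def by simp
  also have "\<dots> = 1" using ck kpos by simp
  finally show ?thesis using in_C_chain[OF xC a b psQ ch] by simp
qed


lemma chain_le1:
  assumes a: "a \<in> Ps" and b: "b \<in> Ps" and psQ: "set ps \<subseteq> P - Ps"
    and ch: "successively (covers le) (a # ps @ [b])" and ne: "ps \<noteq> []"
  shows "lam b - lam a \<le> 1"
proof (rule ccontr)
  assume "\<not> lam b - lam a \<le> 1"
  then have big: "lam b - lam a > 1" by simp
  note cf = chain_facts[OF ch]
  have dist: "distinct ps" and srt: "sorted_wrt (strictly_below le) ps" using cf by blast+
  define k where "k = length ps"
  have kpos: "0 < k" using ne k_def by simp
  have psQi: "ps ! i \<in> P - Ps" if "i < k" for i using psQ nth_mem that k_def by blast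
  have ord: "(ps ! i, ps ! j) \<in> le" if "i \<le> j" "j < k" for i j
  proof (cases "i = j")
    case True then show ?thesis using that psQi refl by blast
  next
    case False then show ?thesis using sorted_wrt_nth_less[OF srt, of i j] that k_def
      unfolding strictly_below_def by simp
  qed
  have aP: "(a, ps ! i) \<in> le" if "i < k" for i using cf(3)[of i] that k_def unfolding strictly_below_def by simp
  have bP: "(ps ! i, b) \<in> le" if "i < k" for i using cf(4)[of i] that k_def unfolding strictly_below_def by simp
  have cov0: "covers le a (ps ! 0)" using cf(5) ne by blast
  have covk: "covers le (ps ! (k - 1)) b" using cf(6) ne k_def by blast
  have covs: "covers le (ps ! i) (ps ! Suc i)" if "Suc i < k" for i using cf(7)[of i] that k_def by blast
  have finPs: "finite Ps" using PsP finP finite_subset by blast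
  define L where "L w = {a'\<in>Ps. (a',w) \<in> le}" for w
  define lo where "lo w = Max (lam ` L w)" for w
  have finL: "finite (lam ` L w)" for w unfolding L_def using finPs by simp
  have neL: "lam ` L (ps ! i) \<noteq> {}" if "i < k" for i unfolding L_def using aP[OF that] a by blast
  have lo_ge: "lam a' \<le> lo w" if "a' \<in> Ps" "(a',w) \<in> le" for a' w
    unfolding lo_def using finL that unfolding L_def by (intro Max_ge) auto
  have lo_att: "\<exists>a'\<in>Ps. (a', ps ! i) \<in> le \<and> lo (ps ! i) = lam a'" if "i < k" for i
  proof -
    have "lo (ps ! i) \<in> lam ` L (ps ! i)" unfolding lo_def using Max_in[OF finL neL[OF that]] .
    then show ?thesis unfolding L_def by auto
  qed
  have lo0: "lo (ps ! 0) = lam a"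
  proof -
    obtain a' where a': "a' \<in> Ps" "(a', ps ! 0) \<in> le" "lo (ps ! 0) = lam a'" using lo_att kpos by blast
    have "a' = a \<or> lam a' < lam a" using R1[OF a cov0 a'(1,2)] .
    then have "lo (ps ! 0) \<le> lam a" using a' by auto
    moreover have "lam a \<le> lo (ps ! 0)" using lo_ge[OF a aP[OF kpos]] .
    ultimately show ?thesis by simp
  qed
  have lo_mono: "lo (ps ! i) \<le> lo (ps ! j)" if ij: "i \<le> j" "j < k" for i j
  proof -
    have ik: "i < k" using ij by simp
    obtain a' where a': "a' \<in> Ps" "(a', ps ! i) \<in> le" "lo (ps ! i) = lam a'" using lo_att[OF ik] by blast
    have "(a', ps ! j) \<in> le" using a' ord[OF ij] le_trans by blast
    then show ?thesis using lo_ge a' by simp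
  qed
  have lo_b: "lo (ps ! i) \<le> lam b" if ik: "i < k" for i
  proof -
    obtain a' where a': "a' \<in> Ps" "(a', ps ! i) \<in> le" "lo (ps ! i) = lam a'" using lo_att[OF ik] by blast
    have "(a', b) \<in> le" using a' bP[OF ik] le_trans by blast
    then show ?thesis using lmono a' b by simp
  qed
  have gap: "lo (ps ! i) < lam w" if h: "1 \<le> i" "i < k" "w \<in> Ps" "(ps ! (i - 1), w) \<in> le" for i w
  proof -
    obtain a' where a': "a' \<in> Ps" "(a', ps ! i) \<in> le" "lo (ps ! i) = lam a'" using lo_att[OF h(2)] by blast
    have cv: "covers le (ps ! (i - 1)) (ps ! i)" using covs[of "i - 1"] h by simp
    have "lam a' < lam w"
      using R3[OF _ _ cv a'(1) h(3) a'(2) h(4)] psQi[of "i - 1"] psQi[of i] h by auto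
    then show ?thesis using a' by simp
  qed
  define GS where "GS = {(i,w). 1 \<le> i \<and> i < k \<and> w \<in> Ps \<and> (ps ! (i - 1), w) \<in> le}"
  have finGS: "finite GS" by (rule finite_subset[of _ "{..<k} \<times> Ps"]) (auto simp: GS_def finPs)
  define G where "G = (\<lambda>(i,w). lam w - lo (ps ! i)) ` GS"
  have finG: "finite G" unfolding G_def using finGS by simp
  define g0 where "g0 = Min (insert 1 G)"
  have g0pos: "0 < g0" unfolding g0_def
    using finG gap by (subst Min_gr_iff) (auto simp: G_def GS_def)
  have g0le: "g0 \<le> lam w - lo (ps ! i)" if "(i,w) \<in> GS" for i w
    unfolding g0_def using finG that by (intro Min_le) (auto simp: G_def)
  define \<delta> where "\<delta> = g0 / (real k + 1)"
  have dpos: "0 < \<delta>" unfolding \<delta>_def using g0pos by simp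
  have dk: "\<delta> * (real k + 1) = g0" unfolding \<delta>_def by simp
  have gapd: "lo (ps ! i) + real i * \<delta> < lam w" if "(i,w) \<in> GS" for i w
  proof -
    have "i < k" using that unfolding GS_def by simp
    then have "real i * \<delta> < (real k + 1) * \<delta>" using dpos by (intro mult_strict_right_mono) auto
    then have "real i * \<delta> < g0" using dk by (simp add: mult.commute)
    then show ?thesis using g0le[OF that] by simp
  qed
  define cc where "cc j i = (if i < k then lo (ps ! i) + real i * \<delta> - (if j < i then \<delta> else 0) else lam b)"
    for j i :: nat
  have ccC: "zf ps (cc j) \<in> marked_chain_polytope P le Ps lam" for j
  proof (rule feas[OF ne psQ srt a aP[OF kpos]])
    fix i i' assume ii: "i \<le> i'" "i' \<le> length ps"
    show "cc j i \<le> cc j i'"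
    proof (cases "i' = k")
      case True
      show ?thesis
      proof (cases "i < k")
        case False then show ?thesis using ii True by (simp add: cc_def)
      next
        case ik: True
        show ?thesis
        proof (cases "i = 0")
          case True then show ?thesis using lo_b[OF ik] `i' = k` ik by (simp add: cc_def)
        next
          case False
          then have "(i, b) \<in> GS" unfolding GS_def using ik b bP[of "i - 1"] by auto
          then have "lo (ps ! i) + real i * \<delta> < lam b" by (rule gapd)
          then show ?thesis using `i' = k` ik dpos by (simp add: cc_def)
        qed
      qed
    next
      case False
      then have i'k: "i' < k" using ii k_def by simp
      then have ik: "i < k" using ii by simp
      show ?thesis
      proof (cases "i = i'")
        case True then show ?thesis by simp
      next
        case False
        then have "real i + 1 \<le> real i'" using ii by simp
        then have "real i * \<delta> + \<delta> \<le> real i' * \<delta>" using dpos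
          by (metis distrib_right mult_1 mult_right_mono less_imp_le)
        moreover have "lo (ps ! i) \<le> lo (ps ! i')" using lo_mono ii i'k by simp
        ultimately show ?thesis using ik i'k dpos by (simp add: cc_def)
      qed
    qed
  next
    fix i a' assume h: "i < length ps" "a' \<in> Ps" "(a', ps ! i) \<in> le"
    have "lam a' \<le> lo (ps ! i)" using lo_ge h by simp
    moreover have "0 \<le> real i * \<delta> - (if j < i then \<delta> else 0)"
    proof (cases "j < i")
      case True
      then have "1 \<le> real i" by simp
      then have "\<delta> \<le> real i * \<delta>" using dpos by (metis mult_1 mult_right_mono less_imp_le)
      then show ?thesis using True by simp
    qed (use dpos in simp)
    ultimately show "lam a' \<le> cc j i" using h k_def by (simp add: cc_def)
  next
    fix j' w assume h: "j' < length ps" "w \<in> Ps" "(ps ! j', w) \<in> le"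
    show "cc j (Suc j') \<le> lam w"
    proof (cases "Suc j' < k")
      case True
      then have "(Suc j', w) \<in> GS" unfolding GS_def using h by simp
      then have "lo (ps ! Suc j') + real (Suc j') * \<delta> < lam w" by (rule gapd)
      then show ?thesis using True dpos by (simp add: cc_def)
    next
      case False
      then have j'k: "j' = k - 1" using h k_def by simp
      have "b = w \<or> lam b < lam w" using R2[OF b covk h(2)] h(3) j'k by simp
      then show ?thesis using False by (auto simp: cc_def)
    qed
  qed
  define z0 where "z0 = zf ps (cc k)"
  have z0C: "z0 \<in> marked_chain_polytope P le Ps lam" unfolding z0_def by (rule ccC)
  have z0S: "z0 \<in> special_hpoly (P - Ps) N II" using z0C hC by simp
  have z0nn: "0 \<le> z0 v" if "v \<in> P - Ps" for v using z0C that unfolding marked_chain_polytope_def by blast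
  have z0nth: "z0 (ps ! i) = cc k (Suc i) - cc k i" if "i < k" for i
    unfolding z0_def using zf_nth[OF dist] that k_def by simp
  have sumz0: "sum_list (map z0 ps) = lam b - lam a"
  proof -
    have "sum_list (map z0 ps) = (\<Sum>i<k. z0 (ps ! i))"
      by (simp add: sum_list_sum_nth k_def atLeast0LessThan)
    also have "\<dots> = (\<Sum>i<k. cc k (Suc i) - cc k i)" by (rule sum.cong) (simp_all add: z0nth)
    also have "\<dots> = cc k k - cc k 0" by (rule sum_lessThan_telescope)
    also have "\<dots> = lam b - lam a" using kpos lo0 by (simp add: cc_def)
    finally show ?thesis .
  qed
  have setz0: "sum z0 (set ps) = lam b - lam a"
    using sumz0 dist by (simp add: sum_list_distinct_conv_sum_set)
  have ccj: "zf ps (cc j) v = z0 v + (if v = ps ! (k - 1) then \<delta> else 0) - (if v = ps ! j then \<delta> else 0)"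
    if j: "Suc j < k" for j v
  proof (cases "v \<in> set ps")
    case False
    then have "v \<noteq> ps ! (k - 1)" "v \<noteq> ps ! j" using j kpos k_def nth_mem by auto
    then show ?thesis using zf_out[OF False] False unfolding z0_def by simp
  next
    case True
    then obtain i where i: "i < k" "v = ps ! i" by (auto simp: in_set_conv_nth k_def)
    have e1: "(ps ! i = ps ! (k - 1)) = (i = k - 1)" using nth_eq_iff_index_eq[OF dist] i kpos k_def by simp
    have e2: "(ps ! i = ps ! j) = (i = j)" using nth_eq_iff_index_eq[OF dist] i j k_def by simp
    have "zf ps (cc j) v = cc j (Suc i) - cc j i" using zf_nth[OF dist] i k_def by simp
    moreover have "z0 v = cc k (Suc i) - cc k i" using z0nth i by simp
    ultimately show ?thesis using i j e1 e2 by (auto simp: cc_def)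
  qed
  define wpt where "wpt v = z0 v + (if v = ps ! (k - 1) then \<delta> else 0)" for v
  have lastQ: "ps ! (k - 1) \<in> P - Ps" using psQi kpos by simp
  have "wpt \<in> special_hpoly (P - Ps) N II"
    unfolding special_hpoly_def
  proof (intro CollectI conjI ballI)
    show "wpt \<in> vecs (P - Ps)" using z0S lastQ unfolding vecs_def special_hpoly_def wpt_def by auto
    fix i assume "i \<in> N"
    then show "0 \<le> wpt i" using z0S dpos unfolding special_hpoly_def wpt_def by auto
  next
    fix I assume I: "I \<in> II"
    have z0I: "sum z0 I \<le> 1" using z0S I unfolding special_hpoly_def by blast
    show "sum wpt I \<le> 1"
    proof (cases "ps ! (k - 1) \<in> I")
      case False
      then have "sum wpt I = sum z0 I" unfolding wpt_def by (intro sum.cong) auto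
      then show ?thesis using z0I by simp
    next
      case True
      show ?thesis
      proof (cases "set ps \<subseteq> I")
        case True
        have "sum z0 (set ps) \<le> sum z0 I"
          using True finI[OF I] hII I z0nn by (intro sum_mono2) auto
        then show ?thesis using setz0 big z0I by simp
      next
        case False
        then obtain v where v: "v \<in> set ps" "v \<notin> I" by blast
        then obtain j where j0: "j < k" "v = ps ! j" by (auto simp: in_set_conv_nth k_def)
        then have j: "j < k" "ps ! j \<notin> I" using v by auto
        have "j \<noteq> k - 1" using j True by auto
        then have sj: "Suc j < k" using j by simp
        have "zf ps (cc j) \<in> special_hpoly (P - Ps) N II" using ccC hC by simp
        then have "sum (zf ps (cc j)) I \<le> 1" using I unfolding special_hpoly_def by blast
        moreover have "sum (zf ps (cc j)) I = sum wpt I"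
          using j(2) by (intro sum.cong) (auto simp: ccj[OF sj] wpt_def)
        ultimately show ?thesis by simp
      qed
    qed
  qed
  then have wC: "wpt \<in> marked_chain_polytope P le Ps lam" using hC by simp
  have "sum_list (map wpt ps) = sum_list (map z0 ps) + sum_list (map (\<lambda>v. if v = ps ! (k - 1) then \<delta> else 0) ps)"
    unfolding wpt_def by (rule sum_list_addf)
  also have "sum_list (map (\<lambda>v. if v = ps ! (k - 1) then \<delta> else 0) ps) = \<delta>"
    using dist lastQ kpos k_def by (simp add: sum_list_distinct_conv_sum_set)
  finally have "sum_list (map wpt ps) = lam b - lam a + \<delta>" using sumz0 by simp
  then show False using in_C_chain[OF wC a b psQ ch] dpos by simp
qed


lemma R_chain_list:
  assumes psQ: "set ps \<subseteq> P - Ps" and sc: "successively (covers le) ps"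
  shows "is_chain R (set ps)"
proof -
  have "successively (\<lambda>u v. (u,v) \<in> E) ps"
    by (rule successively_mono[OF sc]) (use psQ in \<open>auto simp: E_def\<close>)
  then have srt: "sorted_wrt (\<lambda>u v. (u,v) \<in> E\<^sup>+) ps" by (rule succ_sorted_trancl)
  show ?thesis unfolding is_chain_def
  proof (intro ballI)
    fix c d assume c: "c \<in> set ps" and d: "d \<in> set ps"
    obtain i where i: "i < length ps" "c = ps ! i" using c by (auto simp: in_set_conv_nth)
    obtain j where j: "j < length ps" "d = ps ! j" using d by (auto simp: in_set_conv_nth)
    show "(c,d) \<in> R \<or> (d,c) \<in> R"
    proof (cases "i = j")
      case True
      have "c \<in> P - Ps" using c psQ by blast
      then show ?thesis using True i j unfolding R_def by auto
    next
      case False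
      then have "i < j \<or> j < i" by auto
      then show ?thesis using sorted_wrt_nth_less[OF srt] i j unfolding R_def by blast
    qed
  qed
qed

lemma main: "marked_chain_polytope P le Ps lam = chain_polytope (P - Ps) R"
proof
  show "marked_chain_polytope P le Ps lam \<subseteq> chain_polytope (P - Ps) R"
  proof
    fix x assume xC: "x \<in> marked_chain_polytope P le Ps lam"
    have xv: "x \<in> vecs (P - Ps)" and xn: "\<forall>i\<in>P - Ps. 0 \<le> x i"
      using xC unfolding marked_chain_polytope_def by auto
    show "x \<in> chain_polytope (P - Ps) R"
      unfolding chain_polytope_def
    proof (intro CollectI conjI allI impI)
      show "x \<in> vecs (P - Ps)" "\<forall>c\<in>P - Ps. 0 \<le> x c" using xv xn by auto
      fix Cs assume h: "Cs \<subseteq> P - Ps \<and> is_chain R Cs"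
      show "sum x Cs \<le> 1"
      proof (cases "Cs = {}")
        case True then show ?thesis by simp
      next
        case False
        obtain a b ps where abp: "a \<in> Ps" "b \<in> Ps" "set ps \<subseteq> P - Ps"
          "successively (covers le) (a # ps @ [b])" "Cs \<subseteq> set ps"
          using extend[OF _ False] h by blast
        have ne: "ps \<noteq> []" using abp(5) False by auto
        have d: "distinct ps" using chain_facts[OF abp(4)] by blast
        have "sum x Cs \<le> sum x (set ps)"
          using abp(3,5) xn by (intro sum_mono2) auto
        also have "\<dots> = sum_list (map x ps)" using d by (simp add: sum_list_distinct_conv_sum_set)
        also have "\<dots> \<le> lam b - lam a" by (rule in_C_chain[OF xC abp(1-4)])
        also have "\<dots> \<le> 1" by (rule chain_le1[OF abp(1-4) ne])
        finally show ?thesis .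
      qed
    qed
  qed
next
  show "chain_polytope (P - Ps) R \<subseteq> marked_chain_polytope P le Ps lam"
  proof
    fix x assume xC: "x \<in> chain_polytope (P - Ps) R"
    have xv: "x \<in> vecs (P - Ps)" and xn: "\<forall>i\<in>P - Ps. 0 \<le> x i"
      and xs: "\<And>Cs. Cs \<subseteq> P - Ps \<Longrightarrow> is_chain R Cs \<Longrightarrow> sum x Cs \<le> 1"
      using xC unfolding chain_polytope_def by auto
    show "x \<in> marked_chain_polytope P le Ps lam"
      unfolding marked_chain_polytope_def
    proof (intro CollectI conjI allI impI)
      show "x \<in> vecs (P - Ps)" "\<forall>i\<in>P - Ps. 0 \<le> x i" using xv xn by auto
      fix a b ps assume h: "a \<in> Ps \<and> b \<in> Ps \<and> set ps \<subseteq> P - Ps \<and> successively (covers le) (a # ps @ [b])"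
      then have a: "a \<in> Ps" and b: "b \<in> Ps" and psQ: "set ps \<subseteq> P - Ps"
        and ch: "successively (covers le) (a # ps @ [b])" by auto
      show "sum_list (map x ps) \<le> lam b - lam a"
      proof (cases "ps = []")
        case True
        then have "covers le a b" using ch by simp
        then have "lam a \<le> lam b" using lmono a b covers_le by blast
        then show ?thesis using True by simp
      next
        case False
        have d: "distinct ps" using chain_facts[OF ch] by blast
        have sc: "successively (covers le) ps" using ch by (simp add: successively_append_iff successively_Cons)
        have "sum_list (map x ps) = sum x (set ps)" using d by (simp add: sum_list_distinct_conv_sum_set)
        also have "\<dots> \<le> 1" by (rule xs[OF psQ R_chain_list[OF psQ sc]])
        also have "\<dots> \<le> lam b - lam a" by (rule chain_ge1[OF a b psQ ch False])
        finally show ?thesis .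
      qed
    qed
  qed
qed

end

theorem lemma4p1:
  fixes P Ps :: "'a set" and le :: "('a \<times> 'a) set" and lam :: "'a \<Rightarrow> real"
    and N :: "'a set" and II :: "'a set set"
  assumes "marked_poset P le Ps lam"
    and "strict_marked le Ps lam"
    and "irredundant_marked le Ps lam"
    and "N \<subseteq> P - Ps" and "II \<subseteq> Pow (P - Ps)"
    and "marked_chain_polytope P le Ps lam = special_hpoly (P - Ps) N II"
    and "\<forall>i\<in>N. special_hpoly (P - Ps) (N - {i}) II \<noteq> marked_chain_polytope P le Ps lam"
    and "\<forall>I\<in>II. special_hpoly (P - Ps) N (II - {I}) \<noteq> marked_chain_polytope P le Ps lam"
  shows "\<exists>R. poset_on (P - Ps) R \<and> marked_chain_polytope P le Ps lam = chain_polytope (P - Ps) R"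
proof -
  interpret mp2 P Ps le lam N II
    using assms(1,3,5,6) by (unfold_locales) auto
  show ?thesis using R_poset main by blast
qed

end
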